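(* Let $\mathbf{k}$ be a field with $\mathrm{char}(\mathbf{k}) > d$, let $n \geq 1$, let $\alpha_1,\dots,\alpha_d \in M_n(\mathbf{k})$, and put $T = x_1\alpha_1 + \dots + x_d\alpha_d \in M_n(\mathbf{k}\langle x_1,\dots,x_d\rangle)$. Suppose that \[ \chi_d(T) := \sum_{\sigma\in S_d}(T - x_{\sigma(1)})(T - x_{\sigma(2)})\cdots(T - x_{\sigma(d)}) = 0 \quad \text{in } M_n(\mathbf{k}\langle x_1,\dots,x_d\rangle). \] Then: (1) for some $i \in \{1,\dots,d\}$, $\alpha_i$ has an eigenvector with eigenvalue $1$; and (2) for every $i$, if $m \in \mathbf{k}^n$ satisfies $\alpha_i m = m$, then $\alpha_j m = 0$ for all $j \neq i$.
   Context: $\mathbf{k}\langle x_1,\dots,x_d\rangle$ is the free associative $\mathbf{k}$-algebra on $x_1,\dots,x_d$; in $M_n(\mathbf{k}\langle x_1,\dots,x_d\rangle)$ the scalars $x_i$ commute with the constant matrices $\alpha_j$, and $x_{\sigma(j)}$ denotes the scalar matrix $x_{\sigma(j)}\cdot I_n$. The product over $j=1,\dots,d$ is taken in that order. *)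

theory Defs
  imports "HOL-Analysis.Analysis"
begin

text \<open>Matrices over the free associative algebra k<x_1,...,x_d>.
  An element of M_n(k<x_1..x_d>) is represented by its coefficient family:
  for each word w (a list of variable indices) the n x n matrix over k
  standing in front of the monomial x_w.  Multiplication is the
  convolution along concatenation of words (variables commute with
  constant matrices but not with each other).\<close>

type_synonym ('a, 'n) ncmat = "nat list \<Rightarrow> 'a ^ 'n ^ 'n"

definition nc_mult :: "('a::field, 'n::finite) ncmat \<Rightarrow> ('a, 'n) ncmat \<Rightarrow> ('a, 'n) ncmat" where
  "nc_mult P Q = (\<lambda>w. \<Sum>k\<le>length w. P (take k w) ** Q (drop k w))"

definition nc_diff :: "('a::field, 'n::finite) ncmat \<Rightarrow> ('a, 'n) ncmat \<Rightarrow> ('a, 'n) ncmat" where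
  "nc_diff P Q = (\<lambda>w. P w - Q w)"

definition nc_sum :: "('b \<Rightarrow> ('a::field, 'n::finite) ncmat) \<Rightarrow> 'b set \<Rightarrow> ('a, 'n) ncmat" where
  "nc_sum f A = (\<lambda>w. \<Sum>i\<in>A. f i w)"

text \<open>constant matrix alpha in M_n(k) \<subseteq> M_n(k<x>)\<close>
definition nc_const :: "'a::field ^ 'n::finite ^ 'n \<Rightarrow> ('a, 'n) ncmat" where
  "nc_const A = (\<lambda>w. if w = [] then A else 0)"

text \<open>the scalar matrix x_i * I_n\<close>
definition nc_var :: "nat \<Rightarrow> ('a::field, 'n::finite) ncmat" where
  "nc_var i = (\<lambda>w. if w = [i] then mat 1 else 0)"

definition nc_zero :: "('a::field, 'n::finite) ncmat" where
  "nc_zero = (\<lambda>w. 0)"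

text \<open>ordered product P_1 P_2 ... P_m (left to right)\<close>
definition nc_prod_list :: "('a::field, 'n::finite) ncmat list \<Rightarrow> ('a, 'n) ncmat" where
  "nc_prod_list Ps = foldr nc_mult Ps (nc_const (mat 1))"

text \<open>T = x_1 alpha_1 + ... + x_d alpha_d\<close>
definition T_mat :: "nat \<Rightarrow> (nat \<Rightarrow> 'a::field ^ 'n::finite ^ 'n) \<Rightarrow> ('a, 'n) ncmat" where
  "T_mat d \<alpha> = nc_sum (\<lambda>i. nc_mult (nc_var i) (nc_const (\<alpha> i))) {1..d}"

text \<open>chi_d(T) = sum over sigma in S_d of (T - x_sigma(1)) ... (T - x_sigma(d))\<close>
definition chi :: "nat \<Rightarrow> (nat \<Rightarrow> 'a::field ^ 'n::finite ^ 'n) \<Rightarrow> ('a, 'n) ncmat" where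
  "chi d \<alpha> = nc_sum
     (\<lambda>\<sigma>. nc_prod_list (map (\<lambda>j. nc_diff (T_mat d \<alpha>) (nc_var (\<sigma> j))) [1..<d+1]))
     {\<sigma>. \<sigma> permutes {1..d}}"

end

theory Submission
  imports Defs "HOL-Computational_Algebra.Polynomial"
begin


definition lin :: "(nat \<Rightarrow> 'a::field^'n::finite^'n) \<Rightarrow> ('a,'n) ncmat" where
  "lin f w = (case w of [a] \<Rightarrow> f a | _ \<Rightarrow> 0)"

lemma lin_len: "length w \<noteq> 1 \<Longrightarrow> lin f w = 0"
  by (cases w rule: list.exhaust) (auto simp: lin_def split: list.splits)

lemma lin_single[simp]: "lin f [a] = f a" by (simp add: lin_def)

lemma nc_mult_lin_Nil: "nc_mult (lin f) Q [] = 0"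
  by (simp add: nc_mult_def lin_def)

lemma nc_mult_lin_Cons: "nc_mult (lin f) Q (a#v) = f a ** Q v"
proof -
  have "nc_mult (lin f) Q (a#v) = (\<Sum>k\<in>{..length (a#v)}. lin f (take k (a#v)) ** Q (drop k (a#v)))"
    by (simp add: nc_mult_def)
  also have "\<dots> = lin f (take 1 (a#v)) ** Q (drop 1 (a#v))"
  proof -
    have "(\<Sum>k\<in>{..length (a#v)} - {1}. lin f (take k (a#v)) ** Q (drop k (a#v))) = 0"
    proof (rule sum.neutral, rule ballI)
      fix k assume "k \<in> {..length (a#v)} - {1}"
      then have k: "k \<le> length (a#v)" "k \<noteq> 1" by auto
      have L: "length (take k (a#v)) \<noteq> 1" using k by auto
      then show "lin f (take k (a # v)) ** Q (drop k (a # v)) = 0" by (subst lin_len[OF L]) simp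
    qed
    moreover have "(\<Sum>k\<in>{..length (a#v)}. lin f (take k (a#v)) ** Q (drop k (a#v))) =
      lin f (take 1 (a#v)) ** Q (drop 1 (a#v)) + (\<Sum>k\<in>{..length (a#v)} - {1}. lin f (take k (a#v)) ** Q (drop k (a#v)))"
      by (rule sum.remove) auto
    ultimately show ?thesis by simp
  qed
  finally show ?thesis by simp
qed

fun pl :: "(nat \<Rightarrow> 'a::field^'n::finite^'n) list \<Rightarrow> nat list \<Rightarrow> 'a^'n^'n" where
  "pl [] [] = mat 1"
| "pl (f#fs) (a#w) = f a ** pl fs w"
| "pl _ _ = 0"

lemma nc_prod_list_lin: "nc_prod_list (map lin fs) = pl fs"
proof (induction fs)
  case Nil
  show ?case unfolding nc_prod_list_def
    by (rule ext, case_tac x) (auto simp: nc_const_def)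
next
  case (Cons f fs)
  have "nc_prod_list (map lin (f#fs)) = nc_mult (lin f) (nc_prod_list (map lin fs))"
    by (simp add: nc_prod_list_def)
  then show ?case using Cons
    by (intro ext, case_tac x) (auto simp: nc_mult_lin_Nil nc_mult_lin_Cons)
qed

lemma var_const: "nc_mult (nc_var i) (nc_const A) w = (if w = [i] then A else 0)"
proof (cases "w = [i]")
  case True
  have "nc_mult (nc_var i) (nc_const A) w = (\<Sum>k\<in>{..1}. nc_var i (take k [i]) ** nc_const A (drop k [i]))"
    using True by (simp add: nc_mult_def)
  also have "\<dots> = A" by (simp add: nc_var_def nc_const_def)
  finally show ?thesis using True by simp
next
  case False
  have "nc_mult (nc_var i) (nc_const A) w = 0"
    unfolding nc_mult_def
  proof (rule sum.neutral, clarify)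
    fix k assume "k \<le> length w"
    show "nc_var i (take k w) ** nc_const A (drop k w) = 0"
    proof (cases "take k w = [i] \<and> drop k w = []")
      case True then have "w = [i]" by (metis append_Nil2 append_take_drop_id)
      then show ?thesis using False by simp
    qed (auto simp: nc_var_def nc_const_def)
  qed
  then show ?thesis using False by simp
qed

definition F :: "nat \<Rightarrow> (nat \<Rightarrow> 'a::field^'n::finite^'n) \<Rightarrow> nat \<Rightarrow> nat \<Rightarrow> 'a^'n^'n" where
  "F d \<alpha> j a = (if a \<in> {1..d} then \<alpha> a else 0) - (if a = j then mat 1 else 0)"

lemma T_lin: "T_mat d \<alpha> = lin (\<lambda>a. if a \<in> {1..d} then \<alpha> a else 0)"
proof
  fix w
  show "T_mat d \<alpha> w = lin (\<lambda>a. if a \<in> {1..d} then \<alpha> a else 0) w"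
    unfolding T_mat_def nc_sum_def var_const
    by (cases w rule: list.exhaust) (auto simp: lin_def split: list.splits if_splits)
qed

lemma diff_lin: "nc_diff (T_mat d \<alpha>) (nc_var j) = lin (F d \<alpha> j)"
proof
  fix w
  show "nc_diff (T_mat d \<alpha>) (nc_var j) w = lin (F d \<alpha> j) w"
    unfolding nc_diff_def T_lin F_def
    by (cases w rule: list.exhaust) (auto simp: lin_def nc_var_def split: list.splits)
qed

lemma chi_eq: "chi d \<alpha> w = (\<Sum>\<sigma>\<in>{\<sigma>. \<sigma> permutes {1..d}}. pl (map (\<lambda>j. F d \<alpha> (\<sigma> j)) [1..<d+1]) w)"
proof -
  have "\<And>\<sigma>. map (\<lambda>j. nc_diff (T_mat d \<alpha>) (nc_var (\<sigma> j))) [1..<d+1] = map lin (map (\<lambda>j. F d \<alpha> (\<sigma> j)) [1..<d+1])"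
    by (simp only: map_map o_def diff_lin)
  then show ?thesis unfolding chi_def nc_sum_def by (simp only: nc_prod_list_lin)
qed




lemma sum_mvmult: "(\<Sum>x\<in>S. (A x :: 'a::comm_ring_1^'n::finite^'m::finite)) *v v = (\<Sum>x\<in>S. A x *v v)"
  by (induction S rule: infinite_finite_induct) (auto simp: matrix_vector_mult_add_rdistrib)

lemma of_nat_vec_nth[simp]: "(of_nat n :: 'a::semiring_1^'n) $ l = of_nat n"
  by (induction n) simp_all

lemma F_apply: "i \<in> {1..d} \<Longrightarrow> F d \<alpha> j i = \<alpha> i - (if i = j then mat 1 else 0)"
  by (simp add: F_def)

lemma R: assumes i: "i \<in> {1..d}" and m: "\<alpha> i *v m = m"
  shows "pl (map (\<lambda>k. F d \<alpha> (g k)) ks) (replicate (length ks) i) *v m = (if i \<in> g ` set ks then 0 else m)"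
proof (induction ks)
  case Nil then show ?case by simp
next
  case (Cons k ks)
  have "pl (map (\<lambda>k. F d \<alpha> (g k)) (k#ks)) (replicate (length (k#ks)) i) *v m
     = F d \<alpha> (g k) i *v (pl (map (\<lambda>k. F d \<alpha> (g k)) ks) (replicate (length ks) i) *v m)"
    by (simp add: matrix_vector_mul_assoc)
  also have "\<dots> = F d \<alpha> (g k) i *v (if i \<in> g ` set ks then 0 else m)" using Cons by simp
  also have "\<dots> = (if i \<in> g ` set (k#ks) then 0 else m)"
    using i m by (auto simp: F_apply matrix_vector_mult_diff_rdistrib)
  finally show ?case .
qed

lemma part2:
  fixes \<alpha> :: "nat \<Rightarrow> 'a::field^'n::finite^'n"
  assumes chi0: "\<And>w. chi d \<alpha> w = 0"
    and fne: "of_nat (fact (d - 1)) \<noteq> (0::'a)"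
    and i: "i \<in> {1..d}" and m: "\<alpha> i *v m = m" and j: "j \<in> {1..d}" "j \<noteq> i"
  shows "\<alpha> j *v m = 0"
proof -
  define w where "w = j # replicate (d-1) i"
  define S where "S = {2..d}"
  have D: "{1..d} = insert 1 S" "1 \<notin> S" "finite S" using i by (auto simp: S_def)
  have upt: "[1..<d+1] = 1 # [2..<d+1]" using i by (simp add: upt_conv_Cons numeral_2_eq_2 del: upt_Suc)
  have trm: "pl (map (\<lambda>k. F d \<alpha> (\<sigma> k)) [1..<d+1]) w *v m = (if \<sigma> 1 = i then \<alpha> j *v m else 0)"
    if \<sigma>: "\<sigma> permutes {1..d}" for \<sigma>
  proof -
    have len: "length [2..<d+1] = d - 1" by (simp del: upt_Suc)
    have "pl (map (\<lambda>k. F d \<alpha> (\<sigma> k)) [1..<d+1]) w *v m =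
      F d \<alpha> (\<sigma> 1) j *v (pl (map (\<lambda>k. F d \<alpha> (\<sigma> k)) [2..<d+1]) (replicate (length [2..<d+1]) i) *v m)"
      unfolding upt w_def len by (simp add: matrix_vector_mul_assoc)
    also have "\<dots> = F d \<alpha> (\<sigma> 1) j *v (if i \<in> \<sigma> ` {2..d} then 0 else m)"
      using R[of i d \<alpha> m \<sigma> "[2..<d+1]", OF i m] by (simp del: upt_Suc add: atLeastLessThanSuc_atLeastAtMost)
    also have "(i \<in> \<sigma> ` {2..d}) = (\<sigma> 1 \<noteq> i)"
    proof
      assume "i \<in> \<sigma> ` {2..d}"
      then obtain k where k: "k \<in> {2..d}" "\<sigma> k = i" by auto
      show "\<sigma> 1 \<noteq> i"
      proof
        assume "\<sigma> 1 = i"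
        then have "\<sigma> 1 = \<sigma> k" using k by simp
        then have "1 = k" using permutes_inj[OF \<sigma>] by (auto dest: injD)
        then show False using k by simp
      qed
    next
      assume ne: "\<sigma> 1 \<noteq> i"
      have "i \<in> \<sigma> ` {1..d}" using permutes_image[OF \<sigma>] i by simp
      then obtain k where k: "k \<in> {1..d}" "\<sigma> k = i" by auto
      then have "k \<noteq> 1" using ne by auto
      then show "i \<in> \<sigma> ` {2..d}" using k by force
    qed
    finally show ?thesis using j
      by (auto simp: F_apply matrix_vector_mult_diff_rdistrib)
  qed
  have "0 = chi d \<alpha> w *v m" using chi0 by simp
  also have "\<dots> = (\<Sum>\<sigma>\<in>{\<sigma>. \<sigma> permutes {1..d}}. pl (map (\<lambda>k. F d \<alpha> (\<sigma> k)) [1..<d+1]) w *v m)"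
    by (simp add: chi_eq sum_mvmult)
  also have "\<dots> = (\<Sum>\<sigma>\<in>{\<sigma>. \<sigma> permutes {1..d}}. (if \<sigma> 1 = i then \<alpha> j *v m else 0))"
    by (rule sum.cong[OF refl], rule trm) simp
  also have "\<dots> = (\<Sum>b\<in>insert 1 S. \<Sum>q\<in>{q. q permutes S}. (if (Transposition.transpose 1 b \<circ> q) 1 = i then \<alpha> j *v m else 0))"
    unfolding D(1) by (rule sum_over_permutations_insert[OF D(3,2)])
  also have "\<dots> = (\<Sum>b\<in>insert 1 S. \<Sum>q\<in>{q. q permutes S}. (if b = i then \<alpha> j *v m else 0))"
  proof (intro sum.cong refl)
    fix b q assume "q \<in> {q. q permutes S}"
    then have "q 1 = 1" using D(2) by (auto intro: permutes_not_in)
    then show "(if (Transposition.transpose 1 b \<circ> q) 1 = i then \<alpha> j *v m else 0) = (if b = i then \<alpha> j *v m else 0)"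
      by simp
  qed
  also have "\<dots> = (\<Sum>q\<in>{q. q permutes S}. \<Sum>b\<in>insert 1 S. (if b = i then \<alpha> j *v m else 0))"
    by (rule sum.swap)
  also have "\<dots> = (\<Sum>q\<in>{q. q permutes S}. \<alpha> j *v m)"
  proof (rule sum.cong[OF refl])
    fix q
    have "i \<in> insert 1 S" using i D(1) by blast
    then show "(\<Sum>b\<in>insert 1 S. (if b = i then \<alpha> j *v m else 0)) = \<alpha> j *v m"
      using D(3) by (simp add: sum.delta)
  qed
  finally have Z: "(\<Sum>q\<in>{q. q permutes S}. \<alpha> j *v m) = 0" by simp
  have cS: "card {q. q permutes S} = fact (d - 1)"
    by (rule card_permutations) (auto simp: S_def)
  show ?thesis
  proof (rule vec_eq_iff[THEN iffD2], rule allI)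
    fix l
    have "0 = (\<Sum>q\<in>{q. q permutes S}. \<alpha> j *v m) $ l" using Z by simp
    also have "\<dots> = of_nat (fact (d-1)) * (\<alpha> j *v m) $ l" by (simp add: sum_component cS)
    finally show "(\<alpha> j *v m) $ l = 0 $ l" using fne by simp
  qed
qed




lemma mm_add_r: "((A::'a::semiring_1^'n::finite^'m::finite) + B) ** (C::'a^'p::finite^'n) = A ** C + B ** C"
  by (vector matrix_matrix_mult_def sum.distrib[symmetric] field_simps)
lemma mm_diff_r: "((A::'a::ring_1^'n::finite^'m::finite) - B) ** (C::'a^'p::finite^'n) = A ** C - B ** C"
  by (vector matrix_matrix_mult_def sum_subtractf[symmetric] field_simps)
lemma mm_diff_l: "(A::'a::ring_1^'n::finite^'m::finite) ** (B - C) = A ** B - A ** (C::'a^'p::finite^'n)"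
  by (vector matrix_matrix_mult_def sum_subtractf[symmetric] field_simps)
lemma mm_sum_r: "(\<Sum>x\<in>S. (X x::'a::semiring_1^'n::finite^'m::finite)) ** (Y::'a^'p::finite^'n) = (\<Sum>x\<in>S. X x ** Y)"
  by (induction S rule: infinite_finite_induct) (auto simp: mm_add_r)
lemma mm_sum_l: "(Y::'a::semiring_1^'n::finite^'m::finite) ** (\<Sum>x\<in>S. (X x::'a^'p::finite^'n)) = (\<Sum>x\<in>S. Y ** X x)"
  by (induction S rule: infinite_finite_induct) (auto simp: matrix_add_ldistrib)

lemma mat_mult_l: "mat c ** (A::'a::semiring_1^'n::finite^'m::finite) = (\<chi> i j. c * A$i$j)"
  unfolding matrix_matrix_mult_def mat_def
  by (simp add: vec_eq_iff if_distrib if_distribR sum.delta cong: if_cong)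
lemma mat_mult_r: "(A::'a::semiring_1^'n::finite^'m::finite) ** mat c = (\<chi> i j. A$i$j * c)"
  unfolding matrix_matrix_mult_def mat_def
  by (simp add: vec_eq_iff if_distrib if_distribR sum.delta' cong: if_cong)
lemma mat_comm: "mat c ** (A::'a::comm_semiring_1^'n::finite^'n) = A ** mat c"
  by (simp add: mat_mult_l mat_mult_r mult.commute)

definition Ls :: "'a::field poly \<Rightarrow> 'a^'n::finite^'n \<Rightarrow> 'a poly^'n^'n" where
  "Ls c A = (\<chi> i j. smult (A$i$j) c)"

lemma Ls_mult: "Ls (c*c') (A ** B) = Ls c A ** Ls c' B"
  by (simp add: vec_eq_iff matrix_matrix_mult_def Ls_def smult_sum mult_ac)
lemma Ls_add: "Ls c (A + B) = Ls c A + Ls c B"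
  by (simp add: vec_eq_iff Ls_def smult_add_left)
lemma Ls_diff: "Ls c (A - B) = Ls c A - Ls c B"
  by (simp add: vec_eq_iff Ls_def smult_diff_left)
lemma Ls_zero[simp]: "Ls c 0 = 0"
  by (simp add: vec_eq_iff Ls_def)
lemma Ls_sum: "Ls c (\<Sum>x\<in>S. A x) = (\<Sum>x\<in>S. Ls c (A x))"
  by (induction S rule: infinite_finite_induct) (auto simp: Ls_add)
lemma Ls_mat1: "Ls c (mat 1) = mat c"
  by (simp add: vec_eq_iff Ls_def mat_def)

fun wsum :: "nat set \<Rightarrow> nat \<Rightarrow> (nat list \<Rightarrow> 'b::comm_monoid_add) \<Rightarrow> 'b" where
  "wsum D 0 h = h []"
| "wsum D (Suc n) h = (\<Sum>a\<in>D. wsum D n (\<lambda>v. h (a#v)))"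

lemma wsum_zero: "(\<And>w. h w = 0) \<Longrightarrow> wsum D n h = 0"
  by (induction n arbitrary: h) auto

lemma wsum_sum: "wsum D n (\<lambda>w. \<Sum>s\<in>S. h s w) = (\<Sum>s\<in>S. wsum D n (h s))"
proof (induction n arbitrary: h)
  case (Suc n)
  then show ?case by (simp add: sum.swap[of _ D])
qed simp

lemma wsum_left: "wsum D n (\<lambda>w. (X::'a::semiring_1^'n::finite^'n) ** h w) = X ** wsum D n h"
proof (induction n arbitrary: h)
  case (Suc n)
  then show ?case by (simp add: mm_sum_l)
qed simp

definition G :: "(nat \<Rightarrow> 'a::field poly) \<Rightarrow> nat set \<Rightarrow> (nat \<Rightarrow> 'a^'n::finite^'n) \<Rightarrow> 'a poly^'n^'n" where
  "G t D f = (\<Sum>a\<in>D. Ls (t a) (f a))"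

lemma key: "wsum D (length fs) (\<lambda>w. Ls (prod_list (map t w)) (pl fs w)) = foldr (**) (map (G t D) fs) (mat 1)"
proof (induction fs)
  case Nil
  show ?case by (simp add: Ls_mat1)
next
  case (Cons f fs)
  have "wsum D (length (f#fs)) (\<lambda>w. Ls (prod_list (map t w)) (pl (f#fs) w))
      = (\<Sum>a\<in>D. wsum D (length fs) (\<lambda>v. Ls (t a) (f a) ** Ls (prod_list (map t v)) (pl fs v)))"
    by (simp add: Ls_mult)
  also have "\<dots> = (\<Sum>a\<in>D. Ls (t a) (f a) ** foldr (**) (map (G t D) fs) (mat 1))"
    by (simp add: wsum_left Cons)
  also have "\<dots> = foldr (**) (map (G t D) (f#fs)) (mat 1)"
    by (simp add: G_def mm_sum_r)
  finally show ?case .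
qed




lemma foldr_mat: "foldr (**) xs (B::'a::semiring_1^'n::finite^'n) = foldr (**) xs (mat 1) ** B"
proof (induction xs)
  case (Cons x xs)
  have "foldr (**) (x#xs) B = x ** foldr (**) xs B" by simp
  also have "\<dots> = x ** (foldr (**) xs (mat 1) ** B)" by (simp only: Cons)
  also have "\<dots> = foldr (**) (x#xs) (mat 1) ** B" by (simp add: matrix_mul_assoc)
  finally show ?case .
qed simp

lemma foldr_app: "foldr (**) (xs@ys) (mat 1) = foldr (**) xs (mat 1) ** foldr (**) ys (mat 1 :: 'a::semiring_1^'n::finite^'n)"
  using foldr_mat[of xs "foldr (**) ys (mat 1)"] by simp

lemma comm_foldr: "(\<And>y. y \<in> set ys \<Longrightarrow> x ** y = y ** x) \<Longrightarrow>
   x ** foldr (**) ys (mat 1) = foldr (**) ys (mat 1) ** (x::'a::semiring_1^'n::finite^'n)"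
proof (induction ys)
  case (Cons y ys)
  have xy: "x ** y = y ** x" using Cons.prems by simp
  have IH: "x ** foldr (**) ys (mat 1) = foldr (**) ys (mat 1) ** x" using Cons by simp
  have "x ** foldr (**) (y#ys) (mat 1) = (x ** y) ** foldr (**) ys (mat 1)"
    by (simp add: matrix_mul_assoc)
  also have "\<dots> = y ** (x ** foldr (**) ys (mat 1))" by (simp only: xy matrix_mul_assoc)
  also have "\<dots> = (y ** foldr (**) ys (mat 1)) ** x" by (simp only: IH matrix_mul_assoc)
  also have "\<dots> = foldr (**) (y#ys) (mat 1) ** x" by simp
  finally show ?case .
qed simp

lemma perm_foldr: "mset xs = mset ys \<Longrightarrow> (\<And>a b. a \<in> set xs \<Longrightarrow> b \<in> set xs \<Longrightarrow> a ** b = b ** a) \<Longrightarrow>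
   foldr (**) xs (mat 1) = foldr (**) ys (mat 1 :: 'a::semiring_1^'n::finite^'n)"
proof (induction xs arbitrary: ys)
  case Nil then show ?case by simp
next
  case (Cons x xs)
  have "x \<in> set ys" using Cons.prems(1) by (metis list.set_intros(1) set_mset_mset)
  then obtain ys1 ys2 where ys: "ys = ys1 @ x # ys2" by (meson split_list)
  have ms: "mset xs = mset (ys1 @ ys2)" using Cons.prems(1) ys by simp
  have sub: "set ys1 \<subseteq> set (x#xs)" using Cons.prems(1) ys by (metis Un_iff set_append set_mset_mset subsetI)
  have "foldr (**) ys (mat 1) = foldr (**) ys1 (mat 1) ** (x ** foldr (**) ys2 (mat 1))"
    unfolding ys foldr_app by simp
  also have "\<dots> = (x ** foldr (**) ys1 (mat 1)) ** foldr (**) ys2 (mat 1)"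
    using comm_foldr[of ys1 x] Cons.prems(2) sub by (simp add: matrix_mul_assoc subset_iff)
  also have "\<dots> = x ** foldr (**) (ys1 @ ys2) (mat 1)"
    by (simp only: foldr_app matrix_mul_assoc)
  also have "\<dots> = x ** foldr (**) xs (mat 1)"
    using Cons.IH[OF ms] Cons.prems(2) by simp
  finally show ?case by simp
qed

lemma det_foldr: "det (foldr (**) (map Q L) (mat 1)) = prod_list (map (\<lambda>k. det (Q k :: 'a::comm_ring_1^'n::finite^'n)) L)"
  by (induction L) (auto simp: det_mul)

lemma poly_det: "poly (det (X :: 'a::comm_ring_1 poly^'n::finite^'n)) x = det (\<chi> i j. poly (X$i$j) x)"
  unfolding det_def by (simp add: poly_sum poly_prod of_int_poly)

lemma det_zero_mat: "det (0 :: 'a::comm_ring_1^'n::finite^'n) = 0"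
  unfolding det_def by (simp add: power_0_left)




lemma char_nz:
  assumes ch: "CHAR('a::field) = 0 \<or> CHAR('a) > d" and k: "0 < k" "k \<le> d"
  shows "of_nat k \<noteq> (0::'a)"
proof
  assume "of_nat k = (0::'a)"
  then have "CHAR('a) dvd k" by (simp add: of_nat_eq_0_iff_char_dvd)
  then show False using ch k by (auto dest: dvd_imp_le)
qed

lemma fact_nz:
  assumes ch: "CHAR('a::field) = 0 \<or> CHAR('a) > d" and m: "m \<le> d"
  shows "of_nat (fact m) \<noteq> (0::'a)"
  using m
proof (induction m)
  case (Suc m)
  have "of_nat (fact (Suc m)) = (of_nat (Suc m) :: 'a) * of_nat (fact m)"
    by (simp only: fact_Suc of_nat_mult of_nat_id)
  then show ?case using char_nz[OF ch, of "Suc m"] Suc by (simp only: no_zero_divisors) simp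
qed simp

lemma ofnat_inj:
  assumes ch: "CHAR('a::field) = 0 \<or> CHAR('a) > d" and ij: "i \<in> {1..d}" "l \<in> {1..d}" "i \<noteq> l"
  shows "of_nat i - of_nat l \<noteq> (0::'a)"
proof -
  { fix a b :: nat assume ab: "a \<in> {1..d}" "b \<in> {1..d}" "a < b"
    have "of_nat (b - a) \<noteq> (0::'a)" using char_nz[OF ch, of "b - a"] ab by auto
    then have "of_nat b - of_nat a \<noteq> (0::'a)" using ab by (simp add: of_nat_diff) }
  note * = this
  show ?thesis
  proof (cases "i < l")
    case True then show ?thesis using *[of i l] ij by (metis eq_iff_diff_eq_0)
  next
    case False then show ?thesis using *[of l i] ij by auto
  qed
qed

definition lag :: "nat \<Rightarrow> nat \<Rightarrow> 'a::field poly" where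
  "lag d i = smult (inverse (\<Prod>l\<in>{1..d}-{i}. (of_nat i - of_nat l))) (\<Prod>l\<in>{1..d}-{i}. [:- of_nat l, 1:])"

lemma poly_lag:
  assumes ch: "CHAR('a::field) = 0 \<or> CHAR('a) > d" and ij: "i \<in> {1..d}" "j \<in> {1..d}"
  shows "poly (lag d i :: 'a poly) (of_nat j) = (if i = j then 1 else 0)"
proof (cases "i = j")
  case True
  have "(\<Prod>l\<in>{1..d}-{i}. (of_nat i - of_nat l :: 'a)) \<noteq> 0"
    using ofnat_inj[OF ch ij(1)] by (simp add: prod_zero_iff)
  then show ?thesis using True by (simp add: lag_def poly_prod)
next
  case False
  have "(\<Prod>l\<in>{1..d}-{i}. (of_nat j - of_nat l :: 'a)) = 0"
    using False ij by (subst prod_zero_iff) auto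
  then show ?thesis using False by (simp add: lag_def poly_prod)
qed




lemma part1:
  fixes d :: nat and \<alpha> :: "nat \<Rightarrow> 'a::field ^ 'n::finite ^ 'n"
  assumes ch: "CHAR('a) = 0 \<or> CHAR('a) > d"
    and chi0: "\<And>w. chi d \<alpha> w = 0"
  shows "\<exists>i\<in>{1..d}. \<exists>v :: 'a ^ 'n. v \<noteq> 0 \<and> \<alpha> i *v v = v"
proof (rule ccontr)
  assume H: "\<not> ?thesis"
  define D where "D = {1..d}"
  define L where "L = [1..<d+1]"
  define t :: "nat \<Rightarrow> 'a poly" where "t = lag d"
  define M where "M = (\<Sum>a\<in>D. Ls (t a) (\<alpha> a))"
  define Q where "Q k = M - mat (t k)" for k
  define Perms where "Perms = {\<sigma>. \<sigma> permutes D}"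
  have GF: "G t D (F d \<alpha> j) = Q j" if j: "j \<in> D" for j
  proof -
    have "G t D (F d \<alpha> j) = (\<Sum>a\<in>D. Ls (t a) (\<alpha> a) - (if a = j then Ls (t a) (mat 1) else 0))"
      unfolding G_def F_def D_def by (intro sum.cong refl) (auto simp: Ls_diff)
    also have "\<dots> = M - Ls (t j) (mat 1)"
      using j by (simp add: sum_subtractf M_def D_def)
    finally show ?thesis by (simp add: Q_def Ls_mat1)
  qed
  have commQ: "Q a ** Q b = Q b ** Q a" for a b
  proof -
    have 1: "mat (t a) ** M = M ** mat (t a)" by (rule mat_comm)
    have 2: "mat (t b) ** M = M ** mat (t b)" by (rule mat_comm)
    have 3: "mat (t a) ** mat (t b) = mat (t b) ** (mat (t a) :: 'a poly^'n^'n)" by (rule mat_comm)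
    show ?thesis unfolding Q_def mm_diff_l mm_diff_r 1 2 3 by (simp add: algebra_simps)
  qed
  define P where "P = foldr (**) (map Q L) (mat 1)"
  have term1: "foldr (**) (map (G t D) (map (\<lambda>k. F d \<alpha> (\<sigma> k)) L)) (mat 1) = P" if \<sigma>: "\<sigma> \<in> Perms" for \<sigma>
  proof -
    have sp: "\<sigma> permutes D" using \<sigma> by (simp add: Perms_def)
    have me: "map (G t D) (map (\<lambda>k. F d \<alpha> (\<sigma> k)) L) = map Q (map \<sigma> L)"
      unfolding map_map
    proof (rule map_cong[OF refl])
      fix k assume "k \<in> set L"
      then have "k \<in> D" by (simp add: L_def D_def del: upt_Suc)
      then have "\<sigma> k \<in> D" by (simp add: permutes_in_image[OF sp])
      then show "(G t D \<circ> (\<lambda>k. F d \<alpha> (\<sigma> k))) k = (Q \<circ> \<sigma>) k" using GF by simp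
    qed
    have "mset (map \<sigma> L) = mset L"
    proof (rule set_eq_iff_mset_eq_distinct[THEN iffD1])
      show "distinct (map \<sigma> L)" using permutes_inj[OF sp] by (simp add: L_def distinct_map inj_on_def inj_def)
      show "distinct L" by (simp add: L_def)
      have "set L = D" by (auto simp: L_def D_def)
      then show "set (map \<sigma> L) = set L" using permutes_image[OF sp] by simp
    qed
    then have ms: "mset (map Q (map \<sigma> L)) = mset (map Q L)" by (simp only: mset_map)
    show ?thesis unfolding P_def me
    proof (rule perm_foldr[OF ms])
      fix a b assume "a \<in> set (map Q (map \<sigma> L))" "b \<in> set (map Q (map \<sigma> L))"
      then obtain x y where "a = Q x" "b = Q y" by auto
      then show "a ** b = b ** a" using commQ[of x y] by simp
    qed
  qed
  have "0 = wsum D d (\<lambda>w. Ls (prod_list (map t w)) (chi d \<alpha> w))"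
    by (rule wsum_zero[symmetric]) (simp add: chi0)
  also have "\<dots> = wsum D d (\<lambda>w. \<Sum>\<sigma>\<in>Perms. Ls (prod_list (map t w)) (pl (map (\<lambda>k. F d \<alpha> (\<sigma> k)) L) w))"
    by (simp only: chi_eq Ls_sum Perms_def D_def L_def)
  also have "\<dots> = (\<Sum>\<sigma>\<in>Perms. wsum D d (\<lambda>w. Ls (prod_list (map t w)) (pl (map (\<lambda>k. F d \<alpha> (\<sigma> k)) L) w)))"
    by (rule wsum_sum)
  also have "\<dots> = (\<Sum>\<sigma>\<in>Perms. foldr (**) (map (G t D) (map (\<lambda>k. F d \<alpha> (\<sigma> k)) L)) (mat 1))"
  proof (rule sum.cong[OF refl])
    fix \<sigma>
    have len: "length (map (\<lambda>k. F d \<alpha> (\<sigma> k)) L) = d" by (simp add: L_def)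
    show "wsum D d (\<lambda>w. Ls (prod_list (map t w)) (pl (map (\<lambda>k. F d \<alpha> (\<sigma> k)) L) w)) =
      foldr (**) (map (G t D) (map (\<lambda>k. F d \<alpha> (\<sigma> k)) L)) (mat 1)"
      using key[of D "map (\<lambda>k. F d \<alpha> (\<sigma> k)) L" t] unfolding len .
  qed
  also have "\<dots> = (\<Sum>\<sigma>\<in>Perms. P)" by (rule sum.cong[OF refl]) (rule term1)
  finally have SP: "(\<Sum>\<sigma>\<in>Perms. P) = 0" by simp
  have cP: "card Perms = fact d" unfolding Perms_def D_def by (rule card_permutations) auto
  have fnz: "(of_nat (fact d) :: 'a poly) \<noteq> 0"
    using fact_nz[OF ch, of d] by (simp add: of_nat_poly)
  have P0: "P = 0"
  proof (simp add: vec_eq_iff, intro allI)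
    fix i j
    have "0 = (\<Sum>\<sigma>\<in>Perms. P) $ i $ j" using SP by simp
    also have "\<dots> = of_nat (fact d) * P $ i $ j" by (simp add: sum_component cP)
    finally show "P $ i $ j = 0" using fnz by simp
  qed
  have "prod_list (map (\<lambda>k. det (Q k)) L) = 0"
    using det_foldr[of Q L] P0 by (simp add: P_def det_zero_mat)
  then obtain k where k: "k \<in> set L" "det (Q k) = 0"
    by (auto simp: prod_list_zero_iff)
  have kD: "k \<in> D" using k by (auto simp: L_def D_def)
  have ev: "(\<chi> i j. poly (Q k $ i $ j) (of_nat k)) = \<alpha> k - mat 1"
  proof (simp add: vec_eq_iff, intro allI)
    fix i j
    have "poly (Q k $ i $ j) (of_nat k) = (\<Sum>a\<in>D. \<alpha> a $ i $ j * poly (t a) (of_nat k)) - (if i = j then poly (t k) (of_nat k) else 0)"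
      by (simp add: Q_def M_def sum_component Ls_def mat_def poly_sum)
    also have "\<dots> = (\<Sum>a\<in>D. \<alpha> a $ i $ j * (if a = k then 1 else 0)) - (if i = j then 1 else 0)"
      using kD by (simp add: t_def poly_lag[OF ch] D_def)
    also have "\<dots> = (\<alpha> k - mat 1) $ i $ j"
      using kD by (simp add: D_def mat_def if_distrib cong: if_cong)
    finally show "poly (Q k $ i $ j) (of_nat k) = \<alpha> k $ i $ j - mat 1 $ i $ j" by simp
  qed
  have d0: "det (\<alpha> k - mat 1) = 0"
    using k(2) poly_det[of "Q k" "of_nat k"] ev by simp
  have "\<forall>v. (\<alpha> k - mat 1) *v v = 0 \<longrightarrow> v = 0"
  proof (intro allI impI)
    fix v assume "(\<alpha> k - mat 1) *v v = 0"
    then have "\<alpha> k *v v = v" by (simp add: matrix_vector_mult_diff_rdistrib)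
    then show "v = 0" using H kD by (auto simp: D_def)
  qed
  then have "\<exists>B. B ** (\<alpha> k - mat 1) = mat 1" by (simp only: matrix_left_invertible_ker)
  then obtain B where "B ** (\<alpha> k - mat 1) = mat 1" by blast
  then have "det B * det (\<alpha> k - mat 1) = 1" by (metis det_mul det_I)
  then show False using d0 by simp
qed

theorem mainTheorem5:
  fixes d :: nat and \<alpha> :: "nat \<Rightarrow> 'a::field ^ 'n::finite ^ 'n"
  assumes char: "CHAR('a) = 0 \<or> CHAR('a) > d"
    and chi0: "chi d \<alpha> = nc_zero"
  shows "(\<exists>i\<in>{1..d}. \<exists>v :: 'a ^ 'n. v \<noteq> 0 \<and> \<alpha> i *v v = v)
       \<and> (\<forall>i\<in>{1..d}. \<forall>m :: 'a ^ 'n. \<alpha> i *v m = m \<longrightarrow>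
            (\<forall>j\<in>{1..d}. j \<noteq> i \<longrightarrow> \<alpha> j *v m = 0))"
proof
  have c0: "\<And>w. chi d \<alpha> w = 0" using chi0 by (simp add: nc_zero_def)
  show "\<exists>i\<in>{1..d}. \<exists>v :: 'a ^ 'n. v \<noteq> 0 \<and> \<alpha> i *v v = v" by (rule part1[OF char c0])
  show "\<forall>i\<in>{1..d}. \<forall>m :: 'a ^ 'n. \<alpha> i *v m = m \<longrightarrow> (\<forall>j\<in>{1..d}. j \<noteq> i \<longrightarrow> \<alpha> j *v m = 0)"
  proof (intro ballI allI impI)
    fix i m j assume i: "i \<in> {1..d}" and m: "\<alpha> i *v m = m" and j: "j \<in> {1..d}" "j \<noteq> i"
    show "\<alpha> j *v m = 0"
      by (rule part2[OF c0 fact_nz[OF char] i m j]) simp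
  qed
qed


end
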